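(* Let $A$ be a $d$-dimensional polystochastic matrix of order $n$ and $1\le k\le d-1$. Then $\operatorname{per}A>0$ if and only if there exist $n$ pairwise diagonally located parallel $k$-dimensional planes $\Gamma_1,\dots,\Gamma_n$ of $A$ such that the $(k+1)$-dimensional matrix $(\Gamma_1,\dots,\Gamma_n)$ has positive permanent. Equivalently, $\operatorname{per}A=0$ if and only if $\operatorname{per}(\Gamma_1,\dots,\Gamma_n)=0$ for all families of $n$ pairwise diagonally located parallel $k$-dimensional planes $\Gamma_1,\dots,\Gamma_n$ of $A$.
   Context: A $d$-dimensional matrix of order $n$ is an array $A=(a_\alpha)_{\alpha\in I_n^d}$, $I_n^d=\{0,\dots,n-1\}^d$. A $k$-dimensional plane of direction $(i_1,\dots,i_{d-k})$ is obtained by fixing coordinates $i_1,\dots,i_{d-k}$ to values $(\beta_1,\dots,\beta_{d-k})$ and letting the other $k$ coordinates vary; it is a $k$-dimensional matrix of order $n$. Two planes are parallel if they have the same direction, and parallel planes with fixed values $(\beta_j)$ and $(\gamma_j)$ are diagonally located if $\beta_j\ne\gamma_j$ for all $j$. For parallel $k$-dimensional planes $\Gamma_1,\dots,\Gamma_n$, $(\Gamma_1,\dots,\Gamma_n)$ denotes the $(k+1)$-dimensional matrix of order $n$ whose hyperplanes of the first direction are $\Gamma_1,\dots,\Gamma_n$ in this order. $A$ is polystochastic if it is nonnegative and each line (1-dimensional plane) sums to $1$. A diagonal is a set of $n$ indices any two of which differ in every coordinate; $\operatorname{per}A=\sum_p\prod_{\alpha\in p}a_\alpha$ over all diagonals $p$.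 *)

theory Defs
  imports Complex_Main
begin

text \<open>A d-dimensional matrix of order n is a function on index lists; only its values
  on the index set I_n^d (lists of length d with entries < n) matter.\<close>

definition index_set :: "nat \<Rightarrow> nat \<Rightarrow> nat list set" where
  "index_set n d = {xs. length xs = d \<and> (\<forall>x\<in>set xs. x < n)}"

definition polystochastic :: "nat \<Rightarrow> nat \<Rightarrow> (nat list \<Rightarrow> real) \<Rightarrow> bool" where
  "polystochastic n d A \<longleftrightarrow>
     (\<forall>\<alpha>\<in>index_set n d. 0 \<le> A \<alpha>) \<and>
     (\<forall>\<alpha>\<in>index_set n d. \<forall>i<d. (\<Sum>t<n. A (\<alpha>[i := t])) = 1)"

definition diagonals :: "nat \<Rightarrow> nat \<Rightarrow> nat list set set" where
  "diagonals n d = {p. p \<subseteq> index_set n d \<and> card p = n \<and>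
      (\<forall>a\<in>p. \<forall>b\<in>p. a \<noteq> b \<longrightarrow> (\<forall>i<d. a ! i \<noteq> b ! i))}"

definition per :: "nat \<Rightarrow> nat \<Rightarrow> (nat list \<Rightarrow> real) \<Rightarrow> real" where
  "per n d A = (\<Sum>p\<in>diagonals n d. \<Prod>\<alpha>\<in>p. A \<alpha>)"

text \<open>The plane of A with fixed coordinate set S (the direction) and fixed values
  \<beta> i (i \<in> S), viewed as a (d - card S)-dimensional matrix: its free coordinates
  are the coordinates in {..<d} - S taken in increasing order.\<close>
definition plane :: "nat \<Rightarrow> (nat list \<Rightarrow> real) \<Rightarrow> nat set \<Rightarrow> (nat \<Rightarrow> nat) \<Rightarrow> nat list \<Rightarrow> real" where
  "plane d A S \<beta> \<gamma> = A (map (\<lambda>i. if i \<in> S then \<beta> i else \<gamma> ! card ({..<i} - S)) [0..<d])"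

text \<open>(\<Gamma>_1,...,\<Gamma>_n): the matrix whose first-direction hyperplanes are the planes
  \<Gamma>_{t+1} = plane d A S (\<beta> t), t = 0..n-1.\<close>
definition stack_planes :: "nat \<Rightarrow> (nat list \<Rightarrow> real) \<Rightarrow> nat set \<Rightarrow> (nat \<Rightarrow> nat \<Rightarrow> nat) \<Rightarrow> nat list \<Rightarrow> real" where
  "stack_planes d A S \<beta> xs = plane d A S (\<beta> (hd xs)) (tl xs)"

text \<open>A family of n pairwise diagonally located parallel k-dimensional planes, all with
  direction S (a set of d - k fixed coordinates) and fixed values \<beta> t, t < n.\<close>
definition diag_plane_family :: "nat \<Rightarrow> nat \<Rightarrow> nat \<Rightarrow> nat set \<Rightarrow> (nat \<Rightarrow> nat \<Rightarrow> nat) \<Rightarrow> bool" where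
  "diag_plane_family n d k S \<beta> \<longleftrightarrow>
     S \<subseteq> {..<d} \<and> card S = d - k \<and>
     (\<forall>t<n. \<forall>i\<in>S. \<beta> t i < n) \<and>
     (\<forall>t<n. \<forall>u<n. t \<noteq> u \<longrightarrow> (\<forall>i\<in>S. \<beta> t i \<noteq> \<beta> u i))"

end

theory Submission
  imports Defs
begin

lemma finite_index_set: "finite (index_set n d)"
proof -
  have "index_set n d = {xs. set xs \<subseteq> {..<n} \<and> length xs = d}"
    unfolding index_set_def by auto
  thus ?thesis using finite_lists_length_eq[of "{..<n}" d] by simp
qed

lemma per_facts:
  assumes nn: "\<forall>\<alpha>\<in>index_set n d. 0 \<le> A \<alpha>"
  shows "per n d A > 0 \<longleftrightarrow> (\<exists>p\<in>diagonals n d. \<forall>\<alpha>\<in>p. A \<alpha> > 0)"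
    and "per n d A \<ge> 0"
proof -
  have fin: "finite (diagonals n d)"
  proof (rule finite_subset)
    show "diagonals n d \<subseteq> Pow (index_set n d)" unfolding diagonals_def by auto
    show "finite (Pow (index_set n d))" using finite_index_set by simp
  qed
  have finp: "\<And>p. p \<in> diagonals n d \<Longrightarrow> finite p"
    using finite_index_set unfolding diagonals_def by (auto intro: finite_subset)
  have pn: "\<And>p. p \<in> diagonals n d \<Longrightarrow> 0 \<le> (\<Prod>\<alpha>\<in>p. A \<alpha>)"
    using nn unfolding diagonals_def by (auto intro!: prod_nonneg)
  show ge: "per n d A \<ge> 0" unfolding per_def using pn by (auto intro: sum_nonneg)
  show "per n d A > 0 \<longleftrightarrow> (\<exists>p\<in>diagonals n d. \<forall>\<alpha>\<in>p. A \<alpha> > 0)"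
  proof
    assume pos: "per n d A > 0"
    have "\<exists>p\<in>diagonals n d. (\<Prod>\<alpha>\<in>p. A \<alpha>) \<noteq> 0"
    proof (rule ccontr)
      assume "\<not> ?thesis"
      hence "per n d A = 0" unfolding per_def by (auto intro: sum.neutral)
      thus False using pos by simp
    qed
    then obtain p where p: "p \<in> diagonals n d" "(\<Prod>\<alpha>\<in>p. A \<alpha>) \<noteq> 0" by blast
    have "\<forall>\<alpha>\<in>p. A \<alpha> \<noteq> 0" using p finp[OF p(1)] by (simp add: prod_zero_iff)
    moreover have "\<forall>\<alpha>\<in>p. A \<alpha> \<ge> 0" using p(1) nn unfolding diagonals_def by auto
    ultimately show "\<exists>p\<in>diagonals n d. \<forall>\<alpha>\<in>p. A \<alpha> > 0" using p(1)
      by (metis less_le)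
  next
    assume "\<exists>p\<in>diagonals n d. \<forall>\<alpha>\<in>p. A \<alpha> > 0"
    then obtain p where p: "p \<in> diagonals n d" "\<forall>\<alpha>\<in>p. A \<alpha> > 0" by blast
    have "0 < (\<Prod>\<alpha>\<in>p. A \<alpha>)" using p by (simp add: prod_pos)
    also have "\<dots> \<le> per n d A" unfolding per_def
      by (rule member_le_sum) (use p fin pn in auto)
    finally show "per n d A > 0" .
  qed
qed

definition idx :: "nat \<Rightarrow> nat set \<Rightarrow> (nat \<Rightarrow> nat \<Rightarrow> nat) \<Rightarrow> nat list \<Rightarrow> nat list" where
  "idx d S \<beta> x = map (\<lambda>i. if i \<in> S then \<beta> (hd x) i else tl x ! card ({..<i} - S)) [0..<d]"

lemma stack_idx: "stack_planes d A S \<beta> x = A (idx d S \<beta> x)"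
  unfolding stack_planes_def plane_def idx_def by simp

lemma pos_lt:
  assumes "S \<subseteq> {..<d}" "card S = d - k" "k \<le> d" "i < d" "i \<notin> S"
  shows "card ({..<i} - S) < k"
proof -
  have "{..<i} - S \<subset> {..<d} - S" using assms by auto
  hence "card ({..<i} - S) < card ({..<d} - S)" by (intro psubset_card_mono) auto
  also have "\<dots> = d - card S" using assms(1) by (simp add: card_Diff_subset finite_subset)
  finally show ?thesis using assms by simp
qed

lemma idx_in:
  assumes F: "diag_plane_family n d k S \<beta>" and kd: "k \<le> d"
    and x: "x \<in> index_set n (k+1)"
  shows "idx d S \<beta> x \<in> index_set n d"
proof -
  have lx: "length x = k + 1" and xs: "\<forall>y\<in>set x. y < n" using x unfolding index_set_def by auto
  have hx: "hd x < n" using lx xs by (cases x) auto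
  have "\<forall>y\<in>set (idx d S \<beta> x). y < n"
  proof
    fix y assume "y \<in> set (idx d S \<beta> x)"
    then obtain i where i: "i < d" "y = (if i \<in> S then \<beta> (hd x) i else tl x ! card ({..<i} - S))"
      unfolding idx_def by auto
    show "y < n"
    proof (cases "i \<in> S")
      case True thus ?thesis using i F hx unfolding diag_plane_family_def by auto
    next
      case False
      have "card ({..<i} - S) < k" using pos_lt[of S d k i] F kd i False
        unfolding diag_plane_family_def by auto
      hence "tl x ! card ({..<i} - S) \<in> set (tl x)" using lx by (intro nth_mem) simp
      hence "tl x ! card ({..<i} - S) \<in> set x" by (cases x) auto
      thus ?thesis using i False xs by auto
    qed
  qed
  thus ?thesis unfolding index_set_def idx_def by simp
qed

lemma backward:
  assumes F: "diag_plane_family n d k S \<beta>" and kd: "k \<le> d" and d1: "1 \<le> d"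
    and q: "q \<in> diagonals n (k+1)" and qp: "\<forall>x\<in>q. stack_planes d A S \<beta> x > 0"
  shows "\<exists>p\<in>diagonals n d. \<forall>\<alpha>\<in>p. A \<alpha> > 0"
proof -
  let ?h = "idx d S \<beta>"
  have qs: "q \<subseteq> index_set n (k+1)" and cq: "card q = n"
    and qd: "\<And>a b. a \<in> q \<Longrightarrow> b \<in> q \<Longrightarrow> a \<noteq> b \<Longrightarrow> \<forall>i<k+1. a ! i \<noteq> b ! i"
    using q unfolding diagonals_def by auto
  have diff: "\<forall>i<d. ?h a ! i \<noteq> ?h b ! i" if ab: "a \<in> q" "b \<in> q" "a \<noteq> b" for a b
  proof (intro allI impI)
    fix i assume i: "i < d"
    have la: "length a = k+1" and lb: "length b = k+1" using ab qs unfolding index_set_def by auto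
    have dd: "\<forall>i<k+1. a ! i \<noteq> b ! i" using qd ab by blast
    show "?h a ! i \<noteq> ?h b ! i"
    proof (cases "i \<in> S")
      case True
      have "a ! 0 \<noteq> b ! 0" using dd by auto
      hence "hd a \<noteq> hd b" using la lb by (cases a; cases b) auto
      moreover have "hd a < n" "hd b < n" using ab qs la lb unfolding index_set_def
        by (cases a; cases b; force)+
      ultimately have "\<beta> (hd a) i \<noteq> \<beta> (hd b) i" using F True unfolding diag_plane_family_def by blast
      thus ?thesis using i True unfolding idx_def by simp
    next
      case False
      have c: "card ({..<i} - S) < k" using pos_lt[of S d k i] F kd i False
        unfolding diag_plane_family_def by auto
      have "tl a ! card ({..<i} - S) \<noteq> tl b ! card ({..<i} - S)"
        using dd c la lb by (simp add: nth_tl)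
      thus ?thesis using i False unfolding idx_def by simp
    qed
  qed
  have inj: "inj_on ?h q"
  proof (rule inj_onI, rule ccontr)
    fix a b assume "a \<in> q" "b \<in> q" "?h a = ?h b" "a \<noteq> b"
    thus False using diff[of a b] d1 by auto
  qed
  have "\<forall>x\<in>?h ` q. \<forall>y\<in>?h ` q. x \<noteq> y \<longrightarrow> (\<forall>i<d. x ! i \<noteq> y ! i)"
    using diff by blast
  hence "?h ` q \<in> diagonals n d"
    unfolding diagonals_def using idx_in[OF F kd] qs cq card_image[OF inj]
    by auto
  moreover have "\<forall>\<alpha>\<in>?h ` q. A \<alpha> > 0" using qp stack_idx by (auto simp: stack_idx)
  ultimately show ?thesis by blast
qed

lemma forward:
  assumes kd: "1 \<le> k" "k < d" and p: "p \<in> diagonals n d" and pp: "\<forall>\<alpha>\<in>p. A \<alpha> > 0"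
  shows "\<exists>S \<beta>. diag_plane_family n d k S \<beta> \<and> (\<exists>q\<in>diagonals n (k+1). \<forall>x\<in>q. stack_planes d A S \<beta> x > 0)"
proof -
  let ?m = "d - k"
  let ?S = "{..<?m}"
  let ?f = "\<lambda>\<alpha>::nat list. \<alpha> ! 0"
  have ps: "p \<subseteq> index_set n d" and cp: "card p = n"
    and pd: "\<And>a b. a \<in> p \<Longrightarrow> b \<in> p \<Longrightarrow> a \<noteq> b \<Longrightarrow> \<forall>i<d. a ! i \<noteq> b ! i"
    using p unfolding diagonals_def by auto
  have finp: "finite p" using ps finite_index_set finite_subset by blast
  have injf: "inj_on ?f p"
  proof (rule inj_onI, rule ccontr)
    fix a b assume "a \<in> p" "b \<in> p" "a ! 0 = b ! 0" "a \<noteq> b"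
    thus False using pd[of a b] kd by auto
  qed
  have fimg: "?f ` p = {..<n}"
  proof (rule card_subset_eq)
    show "?f ` p \<subseteq> {..<n}" using ps kd unfolding index_set_def by (force dest!: subsetD intro: nth_mem)
    show "card (?f ` p) = card {..<n}" using card_image[OF injf] cp by simp
  qed simp
  define \<beta> where "\<beta> t i = inv_into p ?f t ! i" for t i
  have invp: "t < n \<Longrightarrow> inv_into p ?f t \<in> p" for t using fimg by (intro inv_into_into) auto
  have invf: "a \<in> p \<Longrightarrow> inv_into p ?f (a ! 0) = a" for a using inv_into_f_f[OF injf] by auto
  have F: "diag_plane_family n d k ?S \<beta>"
    unfolding diag_plane_family_def
  proof (intro conjI allI impI ballI)
    show "?S \<subseteq> {..<d}" by auto
    show "card ?S = d - k" by simp
  next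
    fix t i assume t: "t < n" and i: "i \<in> ?S"
    show "\<beta> t i < n" using invp[OF t] ps i unfolding \<beta>_def index_set_def by auto
  next
    fix t u i assume t: "t < n" and u: "u < n" and tu: "t \<noteq> u" and i: "i \<in> ?S"
    have "inv_into p ?f t \<noteq> inv_into p ?f u"
      using tu fimg t u by (metis f_inv_into_f lessThan_iff)
    thus "\<beta> t i \<noteq> \<beta> u i" using pd[OF invp[OF t] invp[OF u]] i kd unfolding \<beta>_def by auto
  qed
  define g where "g \<alpha> = (\<alpha> ! 0) # drop ?m \<alpha>" for \<alpha> :: "nat list"
  have gidx: "idx d ?S \<beta> (g a) = a" if a: "a \<in> p" for a
  proof -
    have la: "length a = d" using a ps unfolding index_set_def by auto
    show ?thesis
    proof (rule nth_equalityI)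
      show "length (idx d ?S \<beta> (g a)) = length a" using la unfolding idx_def by simp
    next
      fix i assume "i < length (idx d ?S \<beta> (g a))"
      hence i: "i < d" unfolding idx_def by simp
      show "idx d ?S \<beta> (g a) ! i = a ! i"
      proof (cases "i < ?m")
        case True thus ?thesis using i invf[OF a] unfolding idx_def g_def \<beta>_def by simp
      next
        case False
        have "{..<i} - ?S = {?m..<i}" by auto
        hence "card ({..<i} - ?S) = i - ?m" by simp
        thus ?thesis using i False la unfolding idx_def g_def by simp
      qed
    qed
  qed
  have gd: "\<forall>j<k+1. g a ! j \<noteq> g b ! j" if ab: "a \<in> p" "b \<in> p" "a \<noteq> b" for a b
  proof (intro allI impI)
    fix j assume j: "j < k + 1"
    have la: "length a = d" "length b = d" using ab ps unfolding index_set_def by auto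
    have dd: "\<forall>i<d. a ! i \<noteq> b ! i" using pd ab by blast
    show "g a ! j \<noteq> g b ! j"
    proof (cases j)
      case 0 thus ?thesis using dd kd unfolding g_def by auto
    next
      case (Suc j')
      have "a ! (?m + j') \<noteq> b ! (?m + j')" using dd j Suc kd by auto
      thus ?thesis using Suc la j kd unfolding g_def by simp
    qed
  qed
  have injg: "inj_on g p"
  proof (rule inj_onI, rule ccontr)
    fix a b assume "a \<in> p" "b \<in> p" "g a = g b" "a \<noteq> b"
    thus False using gd[of a b] by auto
  qed
  have gin: "g a \<in> index_set n (k+1)" if a: "a \<in> p" for a
  proof -
    have la: "length a = d" and ab: "\<forall>y\<in>set a. y < n" using a ps unfolding index_set_def by auto
    have "a ! 0 < n" using la ab kd by auto
    moreover have "set (drop ?m a) \<subseteq> set a" by (rule set_drop_subset)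
    ultimately show ?thesis using la ab kd unfolding index_set_def g_def by auto
  qed
  have "g ` p \<in> diagonals n (k+1)"
    unfolding diagonals_def using gin cp card_image[OF injg] gd by auto
  moreover have "\<forall>x\<in>g ` p. stack_planes d A ?S \<beta> x > 0"
    using pp gidx by (auto simp: stack_idx)
  ultimately show ?thesis using F by blast
qed

theorem mainTheorem5:
  fixes A :: "nat list \<Rightarrow> real" and n d k :: nat
  assumes "polystochastic n d A" and "1 \<le> k" and "k \<le> d - 1"
  shows "(per n d A > 0 \<longleftrightarrow>
           (\<exists>S \<beta>. diag_plane_family n d k S \<beta> \<and>
                  per n (k + 1) (stack_planes d A S \<beta>) > 0))
       \<and> (per n d A = 0 \<longleftrightarrow>
           (\<forall>S \<beta>. diag_plane_family n d k S \<beta> \<longrightarrow>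
                  per n (k + 1) (stack_planes d A S \<beta>) = 0))"
proof -
  have nn: "\<forall>\<alpha>\<in>index_set n d. 0 \<le> A \<alpha>" using assms(1) unfolding polystochastic_def by auto
  have kd: "k < d" "k \<le> d" "1 \<le> d" using assms by auto
  have nnS: "\<forall>x\<in>index_set n (k+1). 0 \<le> stack_planes d A S \<beta> x"
    if "diag_plane_family n d k S \<beta>" for S \<beta>
    using idx_in[OF that kd(2)] nn by (auto simp: stack_idx)
  have I: "per n d A > 0 \<longleftrightarrow>
           (\<exists>S \<beta>. diag_plane_family n d k S \<beta> \<and>
                  per n (k + 1) (stack_planes d A S \<beta>) > 0)"
  proof
    assume "per n d A > 0"
    then obtain p where "p \<in> diagonals n d" "\<forall>\<alpha>\<in>p. A \<alpha> > 0" using per_facts(1)[OF nn] by blast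
    from forward[OF assms(2) kd(1) this] obtain S \<beta> where
      F: "diag_plane_family n d k S \<beta>" and
      q: "\<exists>q\<in>diagonals n (k+1). \<forall>x\<in>q. stack_planes d A S \<beta> x > 0" by blast
    thus "\<exists>S \<beta>. diag_plane_family n d k S \<beta> \<and> per n (k + 1) (stack_planes d A S \<beta>) > 0"
      using per_facts(1)[OF nnS[OF F]] by blast
  next
    assume "\<exists>S \<beta>. diag_plane_family n d k S \<beta> \<and> per n (k + 1) (stack_planes d A S \<beta>) > 0"
    then obtain S \<beta> where F: "diag_plane_family n d k S \<beta>"
      and pos: "per n (k + 1) (stack_planes d A S \<beta>) > 0" by blast
    then obtain q where "q \<in> diagonals n (k+1)" "\<forall>x\<in>q. stack_planes d A S \<beta> x > 0"
      using per_facts(1)[OF nnS[OF F]] by blast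
    from backward[OF F kd(2) kd(3) this] show "per n d A > 0" using per_facts(1)[OF nn] by blast
  qed
  have ge: "per n d A \<ge> 0" using per_facts(2)[OF nn] .
  have geS: "\<And>S \<beta>. diag_plane_family n d k S \<beta> \<Longrightarrow> per n (k + 1) (stack_planes d A S \<beta>) \<ge> 0"
    using per_facts(2)[OF nnS] by blast
  have II: "per n d A = 0 \<longleftrightarrow>
           (\<forall>S \<beta>. diag_plane_family n d k S \<beta> \<longrightarrow>
                  per n (k + 1) (stack_planes d A S \<beta>) = 0)"
    using I ge geS by (smt (verit))
  show ?thesis using I II by blast
qed

end
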